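(* Let $\mathcal F_1$ and $\mathcal F_2$ be completely positive maps on $M_D$ with spectral radius $1$, where $\mathcal F_1$ is trace-preserving with $\tau(\mathcal F_1)<1$. Let $\rho_1$ be the unique density matrix fixed by $\mathcal F_1$, and let $\mathcal Z_1$ be the fundamental channel of $\mathcal F_1$. Let $\xi$ satisfy $\mathcal F_2^\dagger(\xi)=\xi$ and $\mathrm{Tr}(\rho_1\xi)=1$. If $\|\mathcal Z_1\|_{1\to1}\|\mathcal F_1-\mathcal F_2\|_{1\to1}<1$, then $$\|\mathbb 1-\xi\|_\infty\le\frac{\|\mathcal Z_1\|_{1\to1}\|\mathcal F_1-\mathcal F_2\|_{1\to1}}{1-\|\mathcal Z_1\|_{1\to1}\|\mathcal F_1-\mathcal F_2\|_{1\to1}}.$$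
   Context: Notation: $M_D$ is the space of complex $D\times D$ matrices, $\|\cdot\|_p$ is the Schatten $p$-norm, and $\|\mathcal F\|_{1\to1}:=\sup_{\sigma\ne0}\|\mathcal F(\sigma)\|_1/\|\sigma\|_1$ for a linear map $\mathcal F$ on $M_D$. The dual map $\mathcal F^\dagger$ is defined by $\mathrm{Tr}(A\,\mathcal F(B))=\mathrm{Tr}(\mathcal F^\dagger(A)B)$. The ergodicity coefficient is $\tau(\mathcal F):=\sup\{\|\mathcal F(\sigma)\|_1/\|\sigma\|_1:\ 0\ne\sigma,\ \mathrm{Tr}\,\sigma=0\}$. Fundamental channel: for a completely positive trace-preserving map $\mathcal F$ with $\tau(\mathcal F)<1$ and unique fixed density matrix $\rho$, let $\mathcal F^\infty(X):=\mathrm{Tr}(X)\,\rho$, which equals $\lim_{k\to\infty}\mathcal F^k$. The fundamental channel of $\mathcal F$ is $\mathcal Z:=(\mathrm{id}-\mathcal F+\mathcal F^\infty)^{-1}$. *)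

theory Defs
  imports "HOL-Analysis.Analysis"
begin

text \<open>M_D is modelled as the type complex^'n^'n with D = CARD('n).\<close>

type_synonym 'n cmat = "complex^'n^'n"

definition cscale :: "complex \<Rightarrow> 'n::finite cmat \<Rightarrow> 'n cmat" where
  "cscale c A = (\<chi> i j. c * A$i$j)"

definition adj :: "'n::finite cmat \<Rightarrow> 'n cmat" where
  "adj A = (\<chi> i j. cnj (A$j$i))"

definition clinear_map :: "('n::finite cmat \<Rightarrow> 'n cmat) \<Rightarrow> bool" where
  "clinear_map F \<longleftrightarrow> (\<forall>A B. F (A + B) = F A + F B) \<and> (\<forall>c A. F (cscale c A) = cscale c (F A))"

definition psd :: "'n::finite cmat \<Rightarrow> bool" where
  "psd A \<longleftrightarrow> (\<forall>v::complex^'n. let q = (\<Sum>i\<in>UNIV. cnj (v$i) * (A *v v)$i) in Im q = 0 \<and> Re q \<ge> 0)"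

definition density :: "'n::finite cmat \<Rightarrow> bool" where
  "density A \<longleftrightarrow> psd A \<and> trace A = 1"

text \<open>positivity of a block matrix (X_ij)_{i,j<k} in M_k(M_D) = M_k \<otimes> M_D\<close>
definition block_psd :: "nat \<Rightarrow> (nat \<Rightarrow> nat \<Rightarrow> 'n::finite cmat) \<Rightarrow> bool" where
  "block_psd k X \<longleftrightarrow> (\<forall>v :: nat \<Rightarrow> complex^'n.
     let q = (\<Sum>i<k. \<Sum>j<k. \<Sum>a\<in>UNIV. cnj (v i $ a) * (X i j *v v j) $ a) in Im q = 0 \<and> Re q \<ge> 0)"

definition completely_positive :: "('n::finite cmat \<Rightarrow> 'n cmat) \<Rightarrow> bool" where
  "completely_positive F \<longleftrightarrow> clinear_map F \<and>
     (\<forall>k X. block_psd k X \<longrightarrow> block_psd k (\<lambda>i j. F (X i j)))"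

definition trace_preserving :: "('n::finite cmat \<Rightarrow> 'n cmat) \<Rightarrow> bool" where
  "trace_preserving F \<longleftrightarrow> (\<forall>X. trace (F X) = trace X)"

definition spectral_radius_map :: "('n::finite cmat \<Rightarrow> 'n cmat) \<Rightarrow> real" where
  "spectral_radius_map F = Sup {cmod c | c. \<exists>X. X \<noteq> 0 \<and> F X = cscale c X}"

definition trace_norm :: "'n::finite cmat \<Rightarrow> real" where
  "trace_norm A = Re (trace (THE P. psd P \<and> P ** P = adj A ** A))"

text \<open>Schatten infinity-norm: largest singular value = operator norm\<close>
definition schatten_inf :: "'n::finite cmat \<Rightarrow> real" where
  "schatten_inf A = onorm (\<lambda>x::complex^'n. A *v x)"

definition norm_11 :: "('n::finite cmat \<Rightarrow> 'n cmat) \<Rightarrow> real" where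
  "norm_11 F = Sup {trace_norm (F s) / trace_norm s | s. s \<noteq> 0}"

definition ergodicity_coeff :: "('n::finite cmat \<Rightarrow> 'n cmat) \<Rightarrow> real" where
  "ergodicity_coeff F = Sup {trace_norm (F s) / trace_norm s | s. s \<noteq> 0 \<and> trace s = 0}"

definition dual_map :: "('n::finite cmat \<Rightarrow> 'n cmat) \<Rightarrow> 'n cmat \<Rightarrow> 'n cmat" where
  "dual_map F A = (THE B. \<forall>X. trace (A ** F X) = trace (B ** X))"

text \<open>F^\<infinity>(X) = Tr(X) \<rho>, \<rho> the unique fixed density matrix\<close>
definition limit_channel :: "'n::finite cmat \<Rightarrow> 'n cmat \<Rightarrow> 'n cmat" where
  "limit_channel \<rho> X = cscale (trace X) \<rho>"

definition fundamental_channel :: "('n::finite cmat \<Rightarrow> 'n cmat) \<Rightarrow> 'n cmat \<Rightarrow> 'n cmat \<Rightarrow> 'n cmat" where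
  "fundamental_channel F \<rho> = inv (\<lambda>X. X - F X + limit_channel \<rho> X)"

end

theory Submission
  imports Defs
begin


definition cin :: "complex^'n::finite \<Rightarrow> complex^'n \<Rightarrow> complex" where
  "cin u v = (\<Sum>i\<in>UNIV. cnj (u$i) * v$i)"

lemma cin_add_right: "cin u (v + w) = cin u v + cin u w"
  by (simp add: cin_def distrib_left sum.distrib)
lemma cin_add_left: "cin (u + v) w = cin u w + cin v w"
  by (simp add: cin_def distrib_right sum.distrib)
lemma cin_diff_right: "cin u (v - w) = cin u v - cin u w"
  by (simp add: cin_def right_diff_distrib sum_subtractf)
lemma cin_diff_left: "cin (u - v) w = cin u w - cin v w"
  by (simp add: cin_def left_diff_distrib sum_subtractf)
lemma cin_smult_right: "cin u (c *s v) = c * cin u v"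
  by (simp add: cin_def sum_distrib_left algebra_simps)
lemma cin_smult_left: "cin (c *s u) v = cnj c * cin u v"
  by (simp add: cin_def sum_distrib_left algebra_simps)
lemma cin_scaleR_right: "cin u ((r::real) *\<^sub>R v) = of_real r * cin u v"
  by (simp add: cin_def sum_distrib_left algebra_simps scaleR_conv_of_real[where 'a=complex])
lemma cin_scaleR_left: "cin ((r::real) *\<^sub>R u) v = of_real r * cin u v"
  by (simp add: cin_def sum_distrib_left algebra_simps scaleR_conv_of_real[where 'a=complex])
lemma cin_zero_right[simp]: "cin u 0 = 0" by (simp add: cin_def)
lemma cin_zero_left[simp]: "cin 0 u = 0" by (simp add: cin_def)
lemma cin_neg_right: "cin u (- v) = - cin u v" by (simp add: cin_def sum_negf)
lemma cin_sum_right: "finite K \<Longrightarrow> cin u (\<Sum>k\<in>K. f k) = (\<Sum>k\<in>K. cin u (f k))"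
  by (induct K rule: finite_induct) (auto simp: cin_add_right)
lemma cin_sum_left: "finite K \<Longrightarrow> cin (\<Sum>k\<in>K. f k) u = (\<Sum>k\<in>K. cin (f k) u)"
  by (induct K rule: finite_induct) (auto simp: cin_add_left)
lemma cin_sym: "cin v u = cnj (cin u v)"
  by (simp add: cin_def mult.commute)

lemma norm_sq_vec: "(norm (x::complex^'n::finite))\<^sup>2 = (\<Sum>i\<in>UNIV. (cmod (x$i))\<^sup>2)"
  by (simp add: norm_vec_def L2_set_def sum_nonneg)

lemma cin_self: "cin x x = of_real ((norm x)\<^sup>2)"
proof -
  have "cin x x = (\<Sum>i\<in>UNIV. complex_of_real ((cmod (x$i))\<^sup>2))"
    unfolding cin_def by (rule sum.cong) (auto simp: complex_norm_square mult.commute simp del: of_real_power)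
  also have "\<dots> = of_real ((norm x)\<^sup>2)" by (simp add: norm_sq_vec del: of_real_power)
  finally show ?thesis .
qed

lemma cin_self_Re: "Re (cin x x) = (norm x)\<^sup>2" by (simp add: cin_self)

lemma cin_CS: "cmod (cin u v) \<le> norm u * norm v"
proof -
  have "cmod (cin u v) \<le> (\<Sum>i\<in>UNIV. cmod (u$i) * cmod (v$i))"
    unfolding cin_def by (rule order_trans[OF norm_sum]) (simp add: norm_mult)
  also have "\<dots> \<le> L2_set (\<lambda>i. cmod (u$i)) UNIV * L2_set (\<lambda>i. cmod (v$i)) UNIV"
    using L2_set_mult_ineq[of "\<lambda>i. cmod (u$i)" "\<lambda>i. cmod (v$i)" UNIV] by simp
  finally show ?thesis by (simp add: norm_vec_def)
qed

lemma cin_mv: "cin u (A *v v) = cin (adj A *v u) v"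
proof -
  have "cin u (A *v v) = (\<Sum>i\<in>UNIV. \<Sum>j\<in>UNIV. cnj (u$i) * A$i$j * v$j)"
    by (simp add: cin_def matrix_vector_mult_def sum_distrib_left mult.assoc)
  also have "\<dots> = (\<Sum>j\<in>UNIV. \<Sum>i\<in>UNIV. cnj (u$i) * A$i$j * v$j)"
    by (rule sum.swap)
  also have "\<dots> = cin (adj A *v u) v"
    by (simp add: cin_def adj_def matrix_vector_mult_def sum_distrib_left sum_distrib_right ac_simps)
  finally show ?thesis .
qed

lemma mv_smult: "A *v (c *s v) = c *s (A *v (v::complex^'n::finite))"
  by (simp add: vec_eq_iff matrix_vector_mult_def sum_distrib_left algebra_simps)
lemma mv_scaleR: "A *v ((r::real) *\<^sub>R v) = r *\<^sub>R (A *v (v::complex^'n::finite))"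
  by (simp add: vec_eq_iff matrix_vector_mult_def sum_distrib_left algebra_simps scaleR_conv_of_real[where 'a=complex])
lemma mv_add: "A *v (v + w) = A *v v + A *v (w::complex^'n::finite)"
  by (simp add: matrix_vector_right_distrib)
lemma mv_diff: "A *v (v - w) = A *v v - A *v (w::complex^'n::finite)"
  by (simp add: vec_eq_iff matrix_vector_mult_def right_diff_distrib sum_subtractf)
lemma mv_sum: "finite K \<Longrightarrow> A *v (\<Sum>k\<in>K. f k) = (\<Sum>k\<in>K. A *v (f k :: complex^'n::finite))"
  by (induct K rule: finite_induct) (auto simp: mv_add)
lemma mv_zero[simp]: "A *v (0::complex^'n::finite) = 0"
  by (simp add: vec_eq_iff matrix_vector_mult_def)

lemma adj_adj[simp]: "adj (adj A) = A" by (simp add: adj_def vec_eq_iff)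
lemma adj_mult: "adj (A ** B) = adj B ** adj (A::'n::finite cmat)"
  by (simp add: adj_def vec_eq_iff matrix_matrix_mult_def mult.commute)
lemma adj_diff: "adj (A - B) = adj A - adj (B::'n::finite cmat)"
  by (simp add: adj_def vec_eq_iff)

lemma matrix_eq_mv: "(\<And>x. A *v x = B *v (x::complex^'n::finite)) \<Longrightarrow> A = (B::'n cmat)"
  by (metis matrix_eq)



lemma psd_cin: "psd A \<longleftrightarrow> (\<forall>v. Im (cin v (A *v v)) = 0 \<and> Re (cin v (A *v v)) \<ge> 0)"
  by (simp add: psd_def cin_def Let_def)

lemma cin_axis_left: "cin (axis i 1) w = w$i"
proof -
  have "cin (axis i 1) w = (\<Sum>k\<in>UNIV. if k = i then w$k else 0)"
    unfolding cin_def axis_def by (rule sum.cong) auto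
  then show ?thesis by simp
qed
lemma cin_axis_right: "cin w (axis i 1) = cnj (w$i)"
  by (simp add: cin_def axis_def if_distrib cong: if_cong)
lemma mv_axis: "(A *v axis j 1) $ i = A$i$j"
  by (simp add: matrix_vector_mult_def axis_def if_distrib cong: if_cong)

lemma herm_real: "adj A = A \<Longrightarrow> Im (cin v (A *v v)) = 0"
proof -
  assume h: "adj A = A"
  have "cin v (A *v v) = cnj (cin v (A *v v))"
    by (metis cin_mv cin_sym h)
  then show ?thesis by (metis cnj.simps(2) complex.expand neg_equal_zero)
qed

lemma psd_herm:
  assumes "psd A" shows "adj A = A"
proof -
  let ?h = "\<lambda>u v. cin u (A *v v)"
  have r: "Im (?h v v) = 0" for v using assms by (simp add: psd_cin)
  have exp: "?h (u + w) (u + w) = ?h u u + ?h u w + ?h w u + ?h w w" for u w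
    by (simp add: cin_add_left cin_add_right mv_add)
  have key: "?h u v = cnj (?h v u)" for u v
  proof -
    have 1: "Im (?h u v + ?h v u) = 0" using r[of "u+v"] r[of u] r[of v] exp[of u v] by simp
    have e2: "?h u (\<i> *s v) = \<i> * ?h u v" "?h (\<i> *s v) u = - \<i> * ?h v u"
      by (simp_all add: mv_smult cin_smult_right cin_smult_left)
    have 2: "Im (?h u (\<i> *s v) + ?h (\<i> *s v) u) = 0"
      using r[of "u + \<i> *s v"] r[of u] r[of "\<i> *s v"] exp[of u "\<i> *s v"] by simp
    then have "Re (?h u v) = Re (?h v u)" using e2 by simp
    with 1 show ?thesis by (simp add: complex_eq_iff)
  qed
  show ?thesis
  proof (simp add: vec_eq_iff, intro allI)
    fix i j
    have "A$i$j = ?h (axis i 1) (axis j 1)" by (simp add: cin_axis_left mv_axis)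
    also have "\<dots> = cnj (?h (axis j 1) (axis i 1))" by (rule key)
    also have "\<dots> = cnj (A$j$i)" by (simp add: cin_axis_left mv_axis)
    finally show "adj A $ i $ j = A $ i $ j" by (simp add: adj_def)
  qed
qed

lemma quad_trick:
  fixes a b :: real
  assumes "a \<ge> 0" "b \<ge> 0" "\<And>t. 0 \<le> t\<^sup>2 * b - 2 * t * a"
  shows "a = 0"
proof (rule ccontr)
  assume "a \<noteq> 0" then have a: "a > 0" using assms by simp
  define t where "t = a / (b + 1)"
  have t: "t > 0" using a assms by (simp add: t_def)
  have "t * b < a" using a assms by (simp add: t_def field_simps)
  then have "t * (t * b - 2 * a) < 0" using t a by (simp add: mult_pos_neg)
  moreover have "t * (t * b - 2 * a) = t\<^sup>2 * b - 2 * t * a" by (simp add: algebra_simps power2_eq_square)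
  ultimately show False using assms(3)[of t] by simp
qed

lemma form_zero:
  fixes B :: "'n::finite cmat"
  assumes herm: "adj B = B"
    and add: "\<And>u w. u \<in> S \<Longrightarrow> w \<in> S \<Longrightarrow> u + w \<in> S"
    and scl: "\<And>r u. u \<in> S \<Longrightarrow> (r::real) *\<^sub>R u \<in> S"
    and nn: "\<And>u. u \<in> S \<Longrightarrow> 0 \<le> Re (cin u (B *v u))"
    and v: "v \<in> S" and v0: "Re (cin v (B *v v)) = 0" and Bv: "B *v v \<in> S"
  shows "B *v v = 0"
proof -
  define w where "w = B *v v"
  have c1: "cin v (B *v w) = cin w w" by (metis cin_mv herm w_def)
  have "Re (cin (v + t *\<^sub>R w) (B *v (v + t *\<^sub>R w))) =
        Re (cin v (B *v v)) + 2 * t * (norm w)\<^sup>2 + t\<^sup>2 * Re (cin w (B *v w))" for t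
    by (simp add: cin_add_left cin_add_right mv_add mv_scaleR cin_scaleR_left cin_scaleR_right
        c1 flip: w_def) (simp add: cin_self power2_eq_square algebra_simps)
  moreover have "v + t *\<^sub>R w \<in> S" for t using add scl v Bv w_def by simp
  ultimately have "0 \<le> 2 * t * (norm w)\<^sup>2 + t\<^sup>2 * Re (cin w (B *v w))" for t
    using nn v0 by fastforce
  from this[of "-t" for t] have "0 \<le> t\<^sup>2 * Re (cin w (B *v w)) - 2 * t * (norm w)\<^sup>2" for t
    by simp
  from quad_trick[OF _ _ this] have "(norm w)\<^sup>2 = 0" using nn Bv w_def by simp
  then show ?thesis by (simp add: w_def)
qed

lemma psd_zero: "psd A \<Longrightarrow> Re (cin v (A *v v)) = 0 \<Longrightarrow> A *v v = 0"
  by (rule form_zero[where S=UNIV]) (auto simp: psd_herm psd_cin)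



definition onb_eig :: "'n::finite cmat \<Rightarrow> (complex^'n) set \<Rightarrow> bool" where
  "onb_eig A E \<longleftrightarrow> finite E \<and> (\<forall>e\<in>E. cin e e = 1) \<and> (\<forall>e\<in>E. \<forall>f\<in>E. e \<noteq> f \<longrightarrow> cin e f = 0)
     \<and> (\<forall>e\<in>E. A *v e = cin e (A *v e) *s e)"

lemma inner_cin: "inner u v = Re (cin u (v::complex^'n::finite))"
  by (simp add: inner_vec_def cin_def Re_sum inner_complex_def)

lemma onb_card:
  fixes A :: "'n::finite cmat"
  assumes "onb_eig A E" shows "card E \<le> DIM(complex^'n::finite)"
proof -
  have "pairwise orthogonal E" using assms
    by (auto simp: onb_eig_def pairwise_def orthogonal_def inner_cin)
  moreover have "0 \<notin> E" using assms by (auto simp: onb_eig_def)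
  ultimately have "independent E" by (rule pairwise_orthogonal_independent)
  from independent_bound[OF this] show ?thesis by simp
qed

lemma bl_cin: "bounded_linear (\<lambda>u. cin e (u::complex^'n::finite))"
proof (rule bounded_linear_intro[where K="norm e"])
  show "cin e (x + y) = cin e x + cin e y" for x y by (rule cin_add_right)
  show "cin e (r *\<^sub>R x) = r *\<^sub>R cin e x" for r x by (simp add: cin_scaleR_right scaleR_conv_of_real[where 'a=complex])
  show "norm (cin e x) \<le> norm x * norm e" for x using cin_CS[of e x] by (simp add: mult.commute)
qed

lemma cont_q: "continuous_on S (\<lambda>u. Re (cin u (A *v (u::complex^'n::finite))))"
proof -
  have c: "continuous_on S (\<lambda>u. A *v u)"
    by (rule linear_continuous_on) simp
  show ?thesis unfolding cin_def
    by (intro continuous_intros continuous_on_compose2[OF continuous_on_cnj] c) auto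
qed

lemma mat_mv: "mat c *v v = c *s (v::complex^'n::finite)"
proof -
  have "(mat c *v v)$i = c * v$i" for i
  proof -
    have "(mat c *v v)$i = (\<Sum>j\<in>UNIV. (if i = j then c else 0) * v$j)"
      by (simp add: matrix_vector_mult_def mat_def)
    also have "\<dots> = (\<Sum>j\<in>UNIV. if j = i then c * v$j else 0)"
      by (rule sum.cong) auto
    finally show ?thesis by simp
  qed
  then show ?thesis by (simp add: vec_eq_iff)
qed

lemma spectral_exists:
  fixes A :: "'n::finite cmat"
  assumes herm: "adj A = A"
  shows "\<exists>E. onb_eig A E \<and> (\<forall>x. x = (\<Sum>e\<in>E. cin e x *s e))"
proof -
  have "onb_eig A {}" by (simp add: onb_eig_def)
  from ex_has_greatest_nat[of "onb_eig A" "{}" card "Suc DIM(complex^'n)", OF this]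
  obtain E where E: "onb_eig A E" and max: "\<And>E'. onb_eig A E' \<Longrightarrow> card E' \<le> card E"
    using onb_card by (metis le_imp_less_Suc)
  have fin: "finite E" and n1: "\<And>e. e \<in> E \<Longrightarrow> cin e e = 1"
    and orth: "\<And>e f. e \<in> E \<Longrightarrow> f \<in> E \<Longrightarrow> e \<noteq> f \<Longrightarrow> cin e f = 0"
    and eig: "\<And>e. e \<in> E \<Longrightarrow> A *v e = cin e (A *v e) *s e"
    using E by (auto simp: onb_eig_def)
  define S where "S = {u. \<forall>e\<in>E. cin e u = 0}"
  have Sadd: "u + w \<in> S" if "u \<in> S" "w \<in> S" for u w using that by (simp add: S_def cin_add_right)
  have Sscl: "r *\<^sub>R u \<in> S" if "u \<in> S" for u r using that by (simp add: S_def cin_scaleR_right)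
  have SA: "A *v u \<in> S" if "u \<in> S" for u
  proof -
    have "cin e (A *v u) = 0" if "e \<in> E" for e
    proof -
      have "cin e (A *v u) = cin (A *v e) u" by (metis cin_mv herm)
      also have "\<dots> = cnj (cin e (A *v e)) * cin e u" by (subst eig[OF \<open>e\<in>E\<close>]) (simp add: cin_smult_left)
      finally show ?thesis using \<open>u \<in> S\<close> \<open>e\<in>E\<close> by (simp add: S_def)
    qed
    then show ?thesis by (simp add: S_def)
  qed
  have closedS: "closed S"
  proof -
    have "S = (\<Inter>e\<in>E. {u. cin e u = 0})" by (auto simp: S_def)
    moreover have "closed {u. cin e u = 0}" for e
      by (rule closed_Collect_eq) (auto intro: linear_continuous_on bl_cin)
    ultimately show ?thesis by auto
  qed
  have "x = (\<Sum>e\<in>E. cin e x *s e)" for x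
  proof (rule ccontr)
    assume ne: "x \<noteq> (\<Sum>e\<in>E. cin e x *s e)"
    define r where "r = x - (\<Sum>e\<in>E. cin e x *s e)"
    have r0: "r \<noteq> 0" using ne by (simp add: r_def)
    have rS: "r \<in> S"
    proof -
      have "cin f r = 0" if "f \<in> E" for f
      proof -
        have "(\<Sum>e\<in>E. cin e x * cin f e) = (\<Sum>e\<in>E. if e = f then cin e x else 0)"
          by (rule sum.cong) (auto simp: n1 orth \<open>f\<in>E\<close>)
        also have "\<dots> = cin f x" using fin \<open>f\<in>E\<close> by simp
        finally show ?thesis
          by (simp add: r_def cin_diff_right cin_sum_right[OF fin] cin_smult_right)
      qed
      then show ?thesis by (simp add: S_def)
    qed
    define K where "K = S \<inter> sphere 0 1"
    have "compact K" unfolding K_def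
      by (rule closed_Int_compact[OF closedS compact_sphere])
    moreover have "(1 / norm r) *\<^sub>R r \<in> K" using r0 rS Sscl by (simp add: K_def)
    ultimately obtain v where vK: "v \<in> K"
      and vmax: "\<And>y. y \<in> K \<Longrightarrow> Re (cin y (A *v y)) \<le> Re (cin v (A *v v))"
      using continuous_attains_sup[of K "\<lambda>u. Re (cin u (A *v u))"] cont_q by blast
    have vS: "v \<in> S" and nv: "norm v = 1" using vK by (auto simp: K_def)
    define l where "l = Re (cin v (A *v v))"
    have qle: "Re (cin u (A *v u)) \<le> l * (norm u)\<^sup>2" if "u \<in> S" for u
    proof (cases "u = 0")
      case True then show ?thesis by simp
    next
      case False
      have uK: "(1 / norm u) *\<^sub>R u \<in> K" using False that Sscl by (simp add: K_def)
      have eq: "Re (cin ((1 / norm u) *\<^sub>R u) (A *v ((1 / norm u) *\<^sub>R u))) = Re (cin u (A *v u)) / (norm u)\<^sup>2"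
        by (simp add: mv_scaleR cin_scaleR_left cin_scaleR_right power2_eq_square)
      from vmax[OF uK] have "Re (cin u (A *v u)) / (norm u)\<^sup>2 \<le> l"
        by (simp only: eq l_def)
      then show ?thesis using False by (simp add: divide_le_eq mult.commute)
    qed
    define B where "B = mat (of_real l) - A"
    have Bmv: "B *v u = of_real l *s u - A *v u" for u
      by (simp add: B_def matrix_vector_mult_diff_rdistrib mat_mv)
    have hB: "adj B = B" using herm by (simp add: B_def adj_diff) (simp add: adj_def mat_def vec_eq_iff)
    have "B *v v = 0"
    proof (rule form_zero[OF hB, where S=S])
      show "u + w \<in> S" if "u \<in> S" "w \<in> S" for u w using Sadd that .
      show "r *\<^sub>R u \<in> S" if "u \<in> S" for u r using Sscl that .
      show "0 \<le> Re (cin u (B *v u))" if "u \<in> S" for u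
        using qle[OF that] by (simp add: Bmv cin_diff_right cin_smult_right cin_self)
      show "v \<in> S" by fact
      show "Re (cin v (B *v v)) = 0"
        by (simp add: Bmv cin_diff_right cin_smult_right cin_self nv l_def)
      show "B *v v \<in> S" unfolding Bmv
        using vS SA[OF vS] by (simp add: S_def cin_diff_right cin_smult_right)
    qed
    then have Av: "A *v v = of_real l *s v" by (simp add: Bmv)
    have cvv: "cin v v = 1" using nv by (simp add: cin_self)
    have Av': "A *v v = cin v (A *v v) *s v" by (simp add: Av cin_smult_right cvv)
    have vE: "v \<notin> E" using vS cvv by (auto simp: S_def)
    have ve: "cin v e = 0" if "e \<in> E" for e
      using vS that cin_sym[of v e] by (simp add: S_def)
    have "onb_eig A (insert v E)"
      using E vS cvv Av' ve by (auto simp: onb_eig_def S_def)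
    from max[OF this] show False using vE fin by simp
  qed
  with E show ?thesis by blast
qed



definition complete_set :: "(complex^'n::finite) set \<Rightarrow> bool" where
  "complete_set E \<longleftrightarrow> (\<forall>x. x = (\<Sum>e\<in>E. cin e x *s e))"

lemma onb_props:
  assumes "onb_eig A E"
  shows "finite E" "\<And>e. e \<in> E \<Longrightarrow> cin e e = 1"
    "\<And>e f. e \<in> E \<Longrightarrow> f \<in> E \<Longrightarrow> e \<noteq> f \<Longrightarrow> cin e f = 0"
    "\<And>e. e \<in> E \<Longrightarrow> A *v e = cin e (A *v e) *s e"
  using assms by (auto simp: onb_eig_def)

lemma spectral:
  fixes A :: "'n::finite cmat"
  assumes "adj A = A"
  obtains E where "onb_eig A E" "complete_set E"
  using spectral_exists[OF assms] by (auto simp: complete_set_def)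

lemma onb_norm: "onb_eig A E \<Longrightarrow> e \<in> E \<Longrightarrow> norm e = 1"
proof -
  assume "onb_eig A E" "e \<in> E"
  then have "(norm e)\<^sup>2 = 1" using onb_props(2)[of A E e] cin_self_Re[of e] by simp
  then show ?thesis using norm_ge_zero[of e] by (simp add: power2_eq_1_iff)
qed

lemma onb_coeff:
  assumes "onb_eig A E" "f \<in> E"
  shows "cin f (\<Sum>e\<in>E. c e *s e) = c f"
proof -
  have fin: "finite E" using onb_props(1)[OF assms(1)] .
  have "cin f (\<Sum>e\<in>E. c e *s e) = (\<Sum>e\<in>E. c e * cin f e)"
    by (simp add: cin_sum_right[OF fin] cin_smult_right)
  also have "\<dots> = (\<Sum>e\<in>E. if e = f then c e else 0)"
    by (rule sum.cong) (auto simp: onb_props(2,3)[OF assms(1)] assms(2))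
  also have "\<dots> = c f" using fin assms(2) by simp
  finally show ?thesis .
qed

lemma trace_onb:
  assumes fin: "finite E" and c: "complete_set E"
  shows "trace M = (\<Sum>e\<in>E. cin e (M *v e))"
proof -
  have delta: "(\<Sum>e\<in>E. cnj (e$j) * e$i) = (if i = j then 1 else 0)" for i j
  proof -
    have "axis j 1 = (\<Sum>e\<in>E. cin e (axis j 1) *s e)" using c by (simp add: complete_set_def)
    then have "(axis j (1::complex)) $ i = (\<Sum>e\<in>E. cnj (e$j) * e$i)"
      by (metis (no_types, lifting) cin_axis_right sum.cong sum_component vector_smult_component)
    then show ?thesis by (simp add: axis_def)
  qed
  have "(\<Sum>e\<in>E. cin e (M *v e)) = (\<Sum>e\<in>E. \<Sum>i\<in>UNIV. \<Sum>j\<in>UNIV. M$i$j * (cnj (e$i) * e$j))"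
    by (simp add: cin_def matrix_vector_mult_def sum_distrib_left algebra_simps)
  also have "\<dots> = (\<Sum>i\<in>UNIV. \<Sum>j\<in>UNIV. M$i$j * (\<Sum>e\<in>E. cnj (e$i) * e$j))"
    by (simp add: sum_distrib_left sum.swap[of _ E])
  also have "\<dots> = (\<Sum>i\<in>UNIV. \<Sum>j\<in>UNIV. if j = i then M$i$j else 0)"
    by (intro sum.cong refl) (simp add: delta)
  also have "\<dots> = trace M" by (simp add: trace_def)
  finally show ?thesis by simp
qed

lemma spec_apply:
  assumes "onb_eig A E" "complete_set E"
  shows "A *v x = (\<Sum>e\<in>E. (cin e (A *v e) * cin e x) *s e)"
proof -
  have "A *v x = A *v (\<Sum>e\<in>E. cin e x *s e)" using assms(2) by (metis complete_set_def)
  also have "\<dots> = (\<Sum>e\<in>E. cin e x *s (A *v e))" by (simp add: mv_sum[OF onb_props(1)[OF assms(1)]] mv_smult)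
  also have "\<dots> = (\<Sum>e\<in>E. (cin e (A *v e) * cin e x) *s e)"
  proof (rule sum.cong[OF refl])
    fix e assume e: "e \<in> E"
    define m where "m = cin e (A *v e)"
    have Ae: "A *v e = m *s e" unfolding m_def by (rule onb_props(4)[OF assms(1) e])
    have me: "cin e (A *v e) = m" by (simp add: m_def)
    show "cin e x *s (A *v e) = (cin e (A *v e) * cin e x) *s e"
      by (subst me, subst Ae) (simp add: vector_smult_assoc mult.commute)
  qed
  finally show ?thesis .
qed

definition smat :: "(complex^'n::finite \<Rightarrow> complex) \<Rightarrow> (complex^'n) set \<Rightarrow> 'n cmat" where
  "smat g E = (\<chi> i j. \<Sum>e\<in>E. g e * e$i * cnj (e$j))"

lemma smat_mv: "finite E \<Longrightarrow> smat g E *v x = (\<Sum>e\<in>E. (g e * cin e x) *s e)"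
  by (simp add: vec_eq_iff smat_def matrix_vector_mult_def cin_def sum_component
      sum_distrib_left sum_distrib_right sum.swap[of _ E] algebra_simps)

lemma mult_cnj_sq: "z * cnj z = (complex_of_real (cmod z))\<^sup>2"
  by (metis complex_norm_square of_real_power)

lemma adj_mat_herm: "adj (adj Y ** Y) = adj Y ** Y"
  by (simp add: adj_mult)

lemma psd_sqrt_exists:
  fixes Y :: "'n::finite cmat"
  shows "\<exists>P. psd P \<and> P ** P = adj Y ** Y"
proof -
  let ?Q = "adj Y ** Y"
  obtain E where E: "onb_eig ?Q E" and c: "complete_set E" using spectral[OF adj_mat_herm] by blast
  have fin: "finite E" using onb_props(1)[OF E] .
  define s where "s e = complex_of_real (norm (Y *v e))" for e
  have mu: "cin e (?Q *v e) = s e * s e" for e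
  proof -
    have "cin e (?Q *v e) = cin (Y *v e) (Y *v e)"
      by (simp add: matrix_vector_mul_assoc[symmetric] cin_mv)
    then show ?thesis by (simp add: cin_self s_def power2_eq_square)
  qed
  define P where "P = smat s E"
  have Pmv: "P *v x = (\<Sum>e\<in>E. (s e * cin e x) *s e)" for x by (simp add: P_def smat_mv[OF fin])
  have "(P ** P) *v x = ?Q *v x" for x
  proof -
    have "(P ** P) *v x = P *v (P *v x)" by (simp add: matrix_vector_mul_assoc)
    also have "\<dots> = (\<Sum>e\<in>E. (s e * (s e * cin e x)) *s e)"
      unfolding Pmv[of "P *v x"] by (rule sum.cong) (auto simp: Pmv onb_coeff[OF E])
    also have "\<dots> = ?Q *v x" unfolding spec_apply[OF E c, of x] by (simp add: mu mult.assoc)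
    finally show ?thesis .
  qed
  then have PP: "P ** P = ?Q" by (rule matrix_eq_mv)
  have "psd P"
  proof (unfold psd_cin, intro allI)
    fix v
    have "cin v (P *v v) = (\<Sum>e\<in>E. of_real (norm (Y *v e) * (cmod (cin e v))\<^sup>2))"
      by (simp add: Pmv cin_sum_right[OF fin] cin_smult_right s_def)
         (rule sum.cong, auto simp: cin_sym[of v] mult_cnj_sq mult.assoc)
    then show "Im (cin v (P *v v)) = 0 \<and> 0 \<le> Re (cin v (P *v v))"
      by (simp add: Re_sum Im_sum sum_nonneg del: of_real_mult of_real_power)
  qed
  with PP show ?thesis by blast
qed



lemma mv_diff_rdistrib: "(A - B) *v x = A *v x - B *v (x::complex^'n::finite)"
  by (simp add: matrix_vector_mult_diff_rdistrib)

lemma psd_sqrt_unique: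
  fixes A B :: "'n::finite cmat"
  assumes pA: "psd A" and pB: "psd B" and eq: "A ** A = B ** B"
  shows "A = B"
proof -
  define C where "C = A - B"
  have hC: "adj C = C" using psd_herm[OF pA] psd_herm[OF pB] by (simp add: C_def adj_diff)
  obtain E where E: "onb_eig C E" and c: "complete_set E" using spectral[OF hC] by blast
  have Cv: "C *v y = A *v y - B *v y" for y by (simp add: C_def mv_diff_rdistrib)
  have Ce0: "C *v e = 0" if e: "e \<in> E" for e
  proof -
    define g where "g = cin e (C *v e)"
    have Ce: "C *v e = g *s e" unfolding g_def by (rule onb_props(4)[OF E e])
    have gr: "Im g = 0" unfolding g_def by (rule herm_real[OF hC])
    then have cg: "cnj g = g" by (simp add: complex_eq_iff)
    define a where "a = cin e (A *v e)"
    define b where "b = cin e (B *v e)"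
    have "A *v (C *v e) + C *v (B *v e) = (A ** A) *v e - (B ** B) *v e"
      by (simp add: Cv mv_diff matrix_vector_mul_assoc[symmetric])
    also have "\<dots> = 0" by (simp add: eq)
    finally have s0: "A *v (C *v e) + C *v (B *v e) = 0" .
    have t1: "cin e (A *v (C *v e)) = g * a"
      by (simp add: Ce mv_smult cin_smult_right a_def)
    have "cin e (C *v (B *v e)) = cin (C *v e) (B *v e)" by (metis cin_mv hC)
    also have "\<dots> = g * b" by (simp add: Ce cin_smult_left cg b_def)
    finally have t2: "cin e (C *v (B *v e)) = g * b" .
    have "g * (a + b) = 0"
      using arg_cong[OF s0, of "cin e"] t1 t2 by (simp add: cin_add_right distrib_left)
    then have "g = 0 \<or> a + b = 0" by simp
    then show ?thesis
    proof
      assume "g = 0" then show ?thesis by (simp add: Ce)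
    next
      assume ab: "a + b = 0"
      have ra: "Re a \<ge> 0" "Re b \<ge> 0" using pA pB by (auto simp: psd_cin a_def b_def)
      then have "Re a = 0" "Re b = 0" using ab by (auto simp: complex_eq_iff)
      then have "A *v e = 0" "B *v e = 0" using psd_zero pA pB a_def b_def by auto
      then show ?thesis by (simp add: Cv)
    qed
  qed
  have "C *v x = 0 *v x" for x
    by (simp add: spec_apply[OF E c, of x] Ce0)
  then have "C = 0" by (rule matrix_eq_mv)
  then show ?thesis by (simp add: C_def)
qed

lemma trace_norm_eq:
  assumes "psd P" "P ** P = adj Y ** Y"
  shows "trace_norm Y = Re (trace P)"
proof -
  have "(THE P. psd P \<and> P ** P = adj Y ** Y) = P"
  proof (rule the_equality)
    show "psd P \<and> P ** P = adj Y ** Y" using assms by simp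
    fix Q assume "psd Q \<and> Q ** Q = adj Y ** Y"
    then show "Q = P" using psd_sqrt_unique[of Q P] assms by simp
  qed
  then show ?thesis by (simp add: trace_norm_def)
qed

lemma trace_norm_root:
  fixes Y :: "'n::finite cmat"
  obtains P where "psd P" "P ** P = adj Y ** Y" "trace_norm Y = Re (trace P)"
  using psd_sqrt_exists[of Y] trace_norm_eq by blast

lemma norm_le_comp_sum: "norm (x::complex^'n::finite) \<le> (\<Sum>i\<in>UNIV. cmod (x$i))"
  unfolding norm_vec_def by (rule L2_set_le_sum) simp

lemma holder_aux:
  fixes Y M :: "'n::finite cmat"
  obtains E where "finite E" "card E \<le> DIM(complex^'n)" "\<And>e. e \<in> E \<Longrightarrow> norm e = 1"
    "trace_norm Y = (\<Sum>e\<in>E. norm (Y *v e))"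
    "trace (M ** Y) = (\<Sum>e\<in>E. cin e (M *v (Y *v e)))"
proof -
  obtain P where pP: "psd P" and PP: "P ** P = adj Y ** Y" and tn: "trace_norm Y = Re (trace P)"
    by (rule trace_norm_root)
  obtain E where E: "onb_eig P E" and c: "complete_set E" using spectral[OF psd_herm[OF pP]] by blast
  have fin: "finite E" by (rule onb_props(1)[OF E])
  have nY: "norm (Y *v e) = Re (cin e (P *v e))" if e: "e \<in> E" for e
  proof -
    define l where "l = cin e (P *v e)"
    have Pe: "P *v e = l *s e" unfolding l_def by (rule onb_props(4)[OF E e])
    have li: "Im l = 0" and lr: "Re l \<ge> 0" using pP by (auto simp: psd_cin l_def)
    have "(norm (Y *v e))\<^sup>2 = Re (cin (Y *v e) (Y *v e))" by (simp add: cin_self_Re)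
    also have "\<dots> = Re (cin e (adj Y *v (Y *v e)))" by (simp add: cin_mv)
    also have "\<dots> = Re (cin e ((P ** P) *v e))" by (simp add: PP matrix_vector_mul_assoc)
    also have "\<dots> = Re (l * l * cin e e)"
      by (simp add: matrix_vector_mul_assoc[symmetric] Pe mv_smult cin_smult_right mult.assoc)
    also have "\<dots> = (Re l)\<^sup>2" using li onb_props(2)[OF E e] by (simp add: power2_eq_square)
    finally have "(norm (Y *v e))\<^sup>2 = (Re l)\<^sup>2" .
    then show ?thesis using lr by (simp add: l_def power2_eq_iff_nonneg)
  qed
  have "trace_norm Y = (\<Sum>e\<in>E. norm (Y *v e))"
    by (simp add: tn trace_onb[OF fin c, of P] Re_sum nY)
  moreover have "trace (M ** Y) = (\<Sum>e\<in>E. cin e (M *v (Y *v e)))"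
    by (simp add: trace_onb[OF fin c] matrix_vector_mul_assoc)
  ultimately show ?thesis using that fin onb_card[OF E] onb_norm[OF E] by blast
qed

lemma holder:
  fixes Y M :: "'n::finite cmat"
  shows "cmod (trace (M ** Y)) \<le> onorm ((*v) M) * trace_norm Y"
proof -
  obtain E where fin: "finite E" and n1: "\<And>e. e \<in> E \<Longrightarrow> norm e = 1"
    and tn: "trace_norm Y = (\<Sum>e\<in>E. norm (Y *v e))"
    and tr: "trace (M ** Y) = (\<Sum>e\<in>E. cin e (M *v (Y *v e)))"
    by (rule holder_aux[of Y M]) blast
  have "cmod (trace (M ** Y)) \<le> (\<Sum>e\<in>E. cmod (cin e (M *v (Y *v e))))"
    unfolding tr by (rule norm_sum)
  also have "\<dots> \<le> (\<Sum>e\<in>E. onorm ((*v) M) * norm (Y *v e))"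
  proof (rule sum_mono)
    fix e assume e: "e \<in> E"
    have "cmod (cin e (M *v (Y *v e))) \<le> norm e * norm (M *v (Y *v e))" by (rule cin_CS)
    also have "\<dots> \<le> onorm ((*v) M) * norm (Y *v e)"
      using onorm[OF matrix_vector_mul_bounded_linear[of M], of "Y *v e"] n1[OF e] by simp
    finally show "cmod (cin e (M *v (Y *v e))) \<le> onorm ((*v) M) * norm (Y *v e)" .
  qed
  also have "\<dots> = onorm ((*v) M) * trace_norm Y" by (simp add: tn sum_distrib_left)
  finally show ?thesis .
qed

lemma trace_norm_nonneg: "trace_norm Y \<ge> 0"
proof -
  obtain E where "trace_norm Y = (\<Sum>e\<in>E. norm (Y *v e))"
    by (rule holder_aux[of Y Y]) blast
  then show ?thesis by (simp add: sum_nonneg)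
qed

lemma entry_le_tn: "cmod (Y$i$j) \<le> trace_norm (Y::'n::finite cmat)"
proof -
  define U :: "'n cmat" where "U = (\<chi> a b. if a = j \<and> b = i then 1 else 0)"
  have "trace (U ** Y) = (\<Sum>a\<in>UNIV. \<Sum>b\<in>UNIV. U$a$b * Y$b$a)"
    by (simp add: trace_def matrix_matrix_mult_def)
  also have "\<dots> = (\<Sum>a\<in>UNIV. if a = j then Y$i$a else 0)"
  proof (rule sum.cong[OF refl])
    fix a
    have "(\<Sum>b\<in>UNIV. U$a$b * Y$b$a) = (\<Sum>b\<in>UNIV. if b = i then (if a = j then Y$b$a else 0) else 0)"
      by (rule sum.cong) (auto simp: U_def)
    then show "(\<Sum>b\<in>UNIV. U$a$b * Y$b$a) = (if a = j then Y$i$a else 0)" by simp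
  qed
  also have "\<dots> = Y$i$j" by simp
  finally have tr: "trace (U ** Y) = Y$i$j" .
  have "onorm ((*v) U) \<le> 1"
  proof (rule onorm_le)
    fix x :: "complex^'n"
    have "(U *v x) = (\<chi> a. if a = j then x$i else 0)"
    proof -
      have "(U *v x)$a = (if a = j then x$i else 0)" for a
      proof -
        have "(U *v x)$a = (\<Sum>b\<in>UNIV. if b = i then (if a = j then x$b else 0) else 0)"
          unfolding matrix_vector_mult_def vec_lambda_beta by (rule sum.cong) (auto simp: U_def)
        then show ?thesis by simp
      qed
      then show ?thesis by (simp add: vec_eq_iff)
    qed
    then have "norm (U *v x) \<le> (\<Sum>a\<in>UNIV. cmod (if a = j then x$i else 0))"
      using norm_le_comp_sum[of "U *v x"] by simp
    also have "\<dots> = cmod (x$i)" by (simp add: if_distrib[of cmod] cong: if_cong)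
    also have "\<dots> \<le> norm x" by (rule Finite_Cartesian_Product.norm_nth_le)
    finally show "norm (U *v x) \<le> 1 * norm x" by simp
  qed
  then show ?thesis using holder[of U Y] tr trace_norm_nonneg[of Y]
    by (metis mult_le_cancel_right1 order_trans mult.commute mult_left_le)
qed



lemma norm_le_comp_sum': "norm (x::'a::real_normed_vector^'n::finite) \<le> (\<Sum>i\<in>UNIV. norm (x$i))"
  unfolding norm_vec_def by (rule L2_set_le_sum) simp

lemma norm_le_entries: "norm (Y::'n::finite cmat) \<le> (\<Sum>i\<in>UNIV. \<Sum>j\<in>UNIV. cmod (Y$i$j))"
  by (rule order_trans[OF norm_le_comp_sum'], rule sum_mono, rule norm_le_comp_sum)

lemma entries_le_norm: "(\<Sum>i\<in>UNIV. \<Sum>j\<in>UNIV. cmod (Y$i$j)) \<le> real CARD('n) * real CARD('n) * norm (Y::'n::finite cmat)"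
proof -
  have "(\<Sum>i\<in>UNIV. \<Sum>j\<in>UNIV. cmod (Y$i$j)) \<le> (\<Sum>i\<in>(UNIV::'n set). \<Sum>j\<in>(UNIV::'n set). norm Y)"
    by (intro sum_mono) (metis Finite_Cartesian_Product.norm_nth_le order_trans)
  then show ?thesis by simp
qed

lemma entries_le_tn: "(\<Sum>i\<in>UNIV. \<Sum>j\<in>UNIV. cmod (Y$i$j)) \<le> real CARD('n) * real CARD('n) * trace_norm (Y::'n::finite cmat)"
proof -
  have "(\<Sum>i\<in>UNIV. \<Sum>j\<in>UNIV. cmod (Y$i$j)) \<le> (\<Sum>i\<in>(UNIV::'n set). \<Sum>j\<in>(UNIV::'n set). trace_norm Y)"
    by (intro sum_mono entry_le_tn)
  then show ?thesis by simp
qed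

lemma mv_bound: "norm (Y *v x) \<le> (\<Sum>i\<in>UNIV. \<Sum>j\<in>UNIV. cmod (Y$i$j)) * norm (x::complex^'n::finite)"
proof -
  have "norm (Y *v x) \<le> (\<Sum>i\<in>UNIV. cmod ((Y *v x)$i))" by (rule norm_le_comp_sum)
  also have "\<dots> \<le> (\<Sum>i\<in>UNIV. \<Sum>j\<in>UNIV. cmod (Y$i$j) * norm x)"
  proof (rule sum_mono)
    fix i
    have "cmod ((Y *v x)$i) \<le> (\<Sum>j\<in>UNIV. cmod (Y$i$j * x$j))"
      unfolding matrix_vector_mult_def vec_lambda_beta by (rule norm_sum)
    also have "\<dots> \<le> (\<Sum>j\<in>UNIV. cmod (Y$i$j) * norm x)"
      by (intro sum_mono) (simp add: norm_mult mult_left_mono Finite_Cartesian_Product.norm_nth_le)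
    finally show "cmod ((Y *v x)$i) \<le> (\<Sum>j\<in>UNIV. cmod (Y$i$j) * norm x)" .
  qed
  also have "\<dots> = (\<Sum>i\<in>UNIV. \<Sum>j\<in>UNIV. cmod (Y$i$j)) * norm x" by (simp add: sum_distrib_right)
  finally show ?thesis .
qed

lemma tn_upper: "trace_norm Y \<le> real DIM(complex^'n) * (\<Sum>i\<in>UNIV. \<Sum>j\<in>UNIV. cmod (Y$i$j))"
  for Y :: "'n::finite cmat"
proof -
  obtain E where fin: "finite E" and cE: "card E \<le> DIM(complex^'n)" and n1: "\<And>e. e \<in> E \<Longrightarrow> norm e = 1"
    and tn: "trace_norm Y = (\<Sum>e\<in>E. norm (Y *v e))"
    by (rule holder_aux[of Y Y]) blast
  have "trace_norm Y \<le> (\<Sum>e\<in>E. (\<Sum>i\<in>UNIV. \<Sum>j\<in>UNIV. cmod (Y$i$j)))"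
    unfolding tn by (intro sum_mono) (metis mv_bound n1 mult.right_neutral)
  also have "\<dots> = real (card E) * (\<Sum>i\<in>UNIV. \<Sum>j\<in>UNIV. cmod (Y$i$j))" by simp
  also have "\<dots> \<le> real DIM(complex^'n) * (\<Sum>i\<in>UNIV. \<Sum>j\<in>UNIV. cmod (Y$i$j))"
    by (rule mult_right_mono) (use cE in \<open>simp_all add: sum_nonneg\<close>)
  finally show ?thesis .
qed

lemma tn_zero[simp]: "trace_norm (0::'n::finite cmat) = 0"
  using tn_upper[of "0::'n cmat"] trace_norm_nonneg[of "0::'n cmat"] by simp

lemma tn_pos: "Y \<noteq> 0 \<Longrightarrow> trace_norm (Y::'n::finite cmat) > 0"
proof -
  assume "Y \<noteq> 0"
  then obtain i j where "Y$i$j \<noteq> 0" by (auto simp: vec_eq_iff)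
  then have "cmod (Y$i$j) > 0" by simp
  then show ?thesis using entry_le_tn[of Y i j] by linarith
qed

lemma tn_bounded:
  fixes F :: "'n::finite cmat \<Rightarrow> 'n cmat"
  assumes "linear F"
  shows "\<exists>C. \<forall>s. trace_norm (F s) \<le> C * trace_norm s"
proof -
  obtain K where K: "K > 0" "\<And>x. norm (F x) \<le> norm x * K"
    using bounded_linear.pos_bounded[of F] assms by (auto simp: linear_conv_bounded_linear)
  define c where "c = real CARD('n) * real CARD('n)"
  have c0: "c \<ge> 0" by (simp add: c_def)
  define d where "d = real DIM(complex^'n)"
  have d0: "d \<ge> 0" by (simp add: d_def)
  have "trace_norm (F s) \<le> (d * c * K * c) * trace_norm s" for s
  proof -
    have "trace_norm (F s) \<le> d * (c * norm (F s))"
      using tn_upper[of "F s"] entries_le_norm[of "F s"] d0 unfolding d_def c_def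
      by (meson mult_left_mono order_trans)
    also have "\<dots> \<le> d * (c * (norm s * K))"
      using K(2)[of s] c0 d0 by (intro mult_left_mono) auto
    also have "\<dots> \<le> d * (c * ((c * trace_norm s) * K))"
      using norm_le_entries[of s] entries_le_tn[of s] c0 d0 K(1) unfolding c_def
      by (intro mult_left_mono mult_right_mono) auto
    finally show ?thesis by (simp add: algebra_simps)
  qed
  then show ?thesis by blast
qed

lemma n11_bdd:
  fixes F :: "'n::finite cmat \<Rightarrow> 'n cmat"
  assumes "linear F"
  shows "bdd_above {trace_norm (F s) / trace_norm s | s. s \<noteq> 0}"
proof -
  obtain C where C: "\<And>s. trace_norm (F s) \<le> C * trace_norm s" using tn_bounded[OF assms] by blast
  have "trace_norm (F s) / trace_norm s \<le> C" if "s \<noteq> 0" for s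
    using C[of s] tn_pos[OF that] by (simp add: divide_le_eq)
  then show ?thesis by (intro bdd_aboveI[where M=C]) auto
qed

lemma n11_le:
  fixes F :: "'n::finite cmat \<Rightarrow> 'n cmat"
  assumes "linear F"
  shows "trace_norm (F s) \<le> norm_11 F * trace_norm s"
proof (cases "s = 0")
  case True then show ?thesis using linear_0[OF assms] by simp
next
  case False
  have "trace_norm (F s) / trace_norm s \<le> norm_11 F"
    unfolding norm_11_def by (rule cSup_upper) (use False n11_bdd[OF assms] in auto)
  then show ?thesis using tn_pos[OF False] by (simp add: divide_le_eq mult.commute)
qed

lemma n11_nonneg:
  fixes F :: "'n::finite cmat \<Rightarrow> 'n cmat"
  assumes "linear F"
  shows "norm_11 F \<ge> 0"
proof -
  have m: "(mat 1 :: 'n cmat) \<noteq> 0" by (simp add: vec_eq_iff mat_def)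
  have mem: "trace_norm (F (mat 1)) / trace_norm (mat 1 :: 'n cmat) \<in> {trace_norm (F s) / trace_norm s | s. s \<noteq> 0}"
    using m by blast
  have "trace_norm (F (mat 1)) / trace_norm (mat 1 :: 'n cmat) \<le> norm_11 F"
    unfolding norm_11_def by (rule cSup_upper[OF mem n11_bdd[OF assms]])
  moreover have "0 \<le> trace_norm (F (mat 1)) / trace_norm (mat 1 :: 'n cmat)"
    using trace_norm_nonneg[of "F (mat 1)"] trace_norm_nonneg[of "mat 1 :: 'n cmat"] by simp
  ultimately show ?thesis by linarith
qed

lemma scaleR_cscale: "r *\<^sub>R A = cscale (of_real r) (A::'n::finite cmat)"
  by (simp add: cscale_def vec_eq_iff scaleR_conv_of_real[where 'a=complex])

lemma clin_linear: "clinear_map F \<Longrightarrow> linear F"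
  by (rule linearI) (auto simp: clinear_map_def scaleR_cscale)



definition Emat :: "'n::finite \<Rightarrow> 'n \<Rightarrow> 'n cmat" where
  "Emat i j = (\<chi> a b. if a = i \<and> b = j then 1 else 0)"

lemma dsum2: "(\<Sum>x\<in>UNIV. \<Sum>y\<in>UNIV. f x y * (if a = x \<and> b = y then 1 else 0)) = (f a b :: complex)"
  for f :: "'n::finite \<Rightarrow> 'm::finite \<Rightarrow> complex"
proof -
  have "(\<Sum>y\<in>UNIV. f x y * (if a = x \<and> b = y then 1 else 0)) = (if x = a then f x b else 0)" for x
  proof (cases "x = a")
    case True
    have "(\<Sum>y\<in>UNIV. f x y * (if a = x \<and> b = y then 1 else 0)) = (\<Sum>y\<in>UNIV. if y = b then f a y else 0)"
      by (rule sum.cong) (auto simp: True)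
    also have "\<dots> = f a b" by simp
    finally show ?thesis using True by simp
  qed auto
  then have "(\<Sum>x\<in>UNIV. \<Sum>y\<in>UNIV. f x y * (if a = x \<and> b = y then 1 else 0)) = (\<Sum>x\<in>UNIV. if x = a then f x b else 0)"
    by simp
  then show ?thesis by simp
qed

lemma dsum2b: "(\<Sum>x\<in>UNIV. \<Sum>y\<in>UNIV. f x y * (if y = b \<and> x = a then 1 else 0)) = (f a b :: complex)"
  for f :: "'n::finite \<Rightarrow> 'm::finite \<Rightarrow> complex"
proof -
  have "(\<Sum>y\<in>UNIV. f x y * (if y = b \<and> x = a then 1 else 0)) = (if x = a then f x b else 0)" for x
  proof (cases "x = a")
    case True
    have "(\<Sum>y\<in>UNIV. f x y * (if y = b \<and> x = a then 1 else 0)) = (\<Sum>y\<in>UNIV. if y = b then f a y else 0)"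
      by (rule sum.cong) (auto simp: True)
    also have "\<dots> = f a b" by simp
    finally show ?thesis using True by simp
  qed auto
  then have "(\<Sum>x\<in>UNIV. \<Sum>y\<in>UNIV. f x y * (if y = b \<and> x = a then 1 else 0)) = (\<Sum>x\<in>UNIV. if x = a then f x b else 0)"
    by simp
  then show ?thesis by simp
qed

lemma mat_decomp: "X = (\<Sum>i\<in>UNIV. \<Sum>j\<in>UNIV. cscale (X$i$j) (Emat i j))"
proof -
  have "(\<Sum>i\<in>UNIV. \<Sum>j\<in>UNIV. cscale (X$i$j) (Emat i j)) $ a $ b = X$a$b" for a b
  proof -
    show ?thesis by (simp add: sum_component cscale_def Emat_def dsum2)
  qed
  then show ?thesis by (simp add: vec_eq_iff)
qed

lemma clin_0: "clinear_map F \<Longrightarrow> F 0 = 0"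
  by (metis add_cancel_right_right clinear_map_def)

lemma clin_sum:
  assumes "clinear_map F" "finite K" shows "F (\<Sum>k\<in>K. g k) = (\<Sum>k\<in>K. F (g k))"
  using assms(2) by (induct K rule: finite_induct) (use assms(1) clin_0 in \<open>auto simp: clinear_map_def\<close>)

lemma tr_add: "trace (A ** (B + C)) = trace (A ** B) + trace (A ** (C::'n::finite cmat))"
  by (simp add: matrix_add_ldistrib trace_add)
lemma tr_sum: "finite K \<Longrightarrow> trace (A ** (\<Sum>k\<in>K. g k)) = (\<Sum>k\<in>K. trace (A ** (g k::'n::finite cmat)))"
  by (induct K rule: finite_induct) (simp_all add: tr_add, simp add: trace_def matrix_matrix_mult_def)
lemma tr_cscale: "trace (A ** cscale c B) = c * trace (A ** (B::'n::finite cmat))"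
  by (simp add: trace_def matrix_matrix_mult_def cscale_def sum_distrib_left algebra_simps)
lemma mm_diff: "A ** (B - C) = A ** B - A ** (C::'n::finite cmat)"
  by (simp add: matrix_matrix_mult_def vec_eq_iff sum_subtractf algebra_simps)
lemma mm_diff_r: "(A - B) ** C = A ** C - B ** (C::'n::finite cmat)"
  by (simp add: matrix_matrix_mult_def vec_eq_iff sum_subtractf algebra_simps)
lemma tr_diff: "trace (A ** (B - C)) = trace (A ** B) - trace (A ** (C::'n::finite cmat))"
  by (simp add: mm_diff trace_sub)
lemma trace_cscale: "trace (cscale c B) = c * trace (B::'n::finite cmat)"
  by (simp add: trace_def cscale_def sum_distrib_left)

lemma dual_prop:
  fixes F :: "'n::finite cmat \<Rightarrow> 'n cmat"
  assumes F: "clinear_map F"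
  shows "trace (dual_map F A ** X) = trace (A ** F X)"
proof -
  define T where "T i j = trace (A ** F (Emat i j))" for i j
  define B0 :: "'n cmat" where "B0 = (\<chi> a b. T b a)"
  have B0: "trace (A ** F X) = trace (B0 ** X)" for X
  proof -
    have "trace (A ** F X) = (\<Sum>i\<in>UNIV. \<Sum>j\<in>UNIV. X$i$j * T i j)"
      apply (subst mat_decomp[of X])
      apply (simp add: clin_sum[OF F] tr_sum tr_cscale T_def)
      apply (intro sum.cong refl)
      using F by (simp add: clinear_map_def tr_cscale)
    also have "\<dots> = (\<Sum>j\<in>UNIV. \<Sum>i\<in>UNIV. X$i$j * T i j)" by (rule sum.swap)
    also have "\<dots> = trace (B0 ** X)"
      by (simp add: trace_def matrix_matrix_mult_def B0_def mult.commute)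
    finally show ?thesis .
  qed
  have uniq: "B = B0" if "\<forall>X. trace (A ** F X) = trace (B ** X)" for B
  proof -
    have tE: "trace (M ** Emat i j) = M$j$i" for M :: "'n cmat" and i j
    proof -
      show ?thesis by (simp add: trace_def matrix_matrix_mult_def Emat_def dsum2b)
    qed
    have "B$j$i = B0$j$i" for i j
      using that B0[of "Emat i j"] tE[of B i j] tE[of B0 i j] by simp
    then show ?thesis by (simp add: vec_eq_iff)
  qed
  have "dual_map F A = B0"
    unfolding dual_map_def by (rule the_equality) (use B0 uniq in auto)
  then show ?thesis using B0 by simp
qed

definition outer :: "complex^'n::finite \<Rightarrow> complex^'n \<Rightarrow> 'n cmat" where
  "outer p q = (\<chi> a b. p$a * cnj (q$b))"

lemma outer_mv: "outer p q *v v = cin q v *s p"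
  by (simp add: vec_eq_iff outer_def matrix_vector_mult_def cin_def sum_distrib_left algebra_simps)

lemma adj_outer: "adj (outer p q) = outer q p"
  by (simp add: vec_eq_iff outer_def adj_def mult.commute)

lemma trace_outer: "trace (M ** outer x w) = cin w (M *v x)"
  by (simp add: trace_def matrix_matrix_mult_def outer_def cin_def matrix_vector_mult_def
      sum_distrib_left algebra_simps)

lemma tn_outer:
  fixes x w :: "complex^'n::finite"
  shows "trace_norm (outer x w) = norm x * norm w"
proof (cases "w = 0")
  case True
  then have "outer x w = 0" by (simp add: outer_def vec_eq_iff)
  then show ?thesis using True by simp
next
  case False
  define k where "k = complex_of_real (norm x / norm w)"
  define P where "P = outer (k *s w) w"
  have nw: "norm w > 0" using False by simp
  have "psd P"
  proof (unfold psd_cin, intro allI)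
    fix v
    have "cin v (P *v v) = of_real (norm x / norm w * (cmod (cin w v))\<^sup>2)"
      by (simp add: P_def outer_mv cin_smult_right k_def cin_sym[of v w] mult_cnj_sq)
    then show "Im (cin v (P *v v)) = 0 \<and> 0 \<le> Re (cin v (P *v v))" by simp
  qed
  moreover have "P ** P = adj (outer x w) ** outer x w"
  proof (rule matrix_eq_mv)
    fix v
    have kk: "k * k * cin w w = cin x x"
      using nw by (simp add: k_def cin_self power2_eq_square)
    have "(P ** P) *v v = P *v (P *v v)" by (simp add: matrix_vector_mul_assoc)
    also have "\<dots> = (cin w v * (k * k * cin w w)) *s w"
      by (simp add: P_def outer_mv cin_smult_right vector_smult_assoc algebra_simps)
    also have "\<dots> = (adj (outer x w) ** outer x w) *v v"
      by (simp add: matrix_vector_mul_assoc[symmetric] adj_outer outer_mv cin_smult_right kk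
          vector_smult_assoc mult.commute)
    finally show "(P ** P) *v v = (adj (outer x w) ** outer x w) *v v" .
  qed
  ultimately have "trace_norm (outer x w) = Re (trace P)" by (rule trace_norm_eq)
  also have "trace P = trace (mat 1 ** P)" by simp
  also have "\<dots> = k * cin w w" unfolding P_def trace_outer by (simp add: cin_smult_right)
  also have "Re (k * cin w w) = norm x * norm w"
    using nw by (simp add: k_def cin_self power2_eq_square)
  finally show ?thesis .
qed



lemma cscale_add_left: "cscale (a + b) M = cscale a M + cscale b (M::'n::finite cmat)"
  by (simp add: cscale_def vec_eq_iff distrib_right)

lemma trace_scaleR: "trace (r *\<^sub>R (X::'n::finite cmat)) = of_real r * trace X"
  by (simp add: scaleR_cscale trace_cscale)

lemma cscale_zero[simp]: "cscale 0 M = (0::'n::finite cmat)"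
  by (simp add: cscale_def vec_eq_iff)

lemma fund_props:
  fixes F1 :: "'n::finite cmat \<Rightarrow> 'n cmat"
  assumes lin: "linear F1" and tp: "trace_preserving F1" and erg: "ergodicity_coeff F1 < 1"
    and tr\<rho>: "trace \<rho> = 1"
  shows "linear (fundamental_channel F1 \<rho>)"
    and "\<And>X. fundamental_channel F1 \<rho> X - F1 (fundamental_channel F1 \<rho> X)
              + limit_channel \<rho> (fundamental_channel F1 \<rho> X) = X"
proof -
  define L where "L X = X - F1 X + limit_channel \<rho> X" for X
  have Zdef: "fundamental_channel F1 \<rho> = inv L"
    by (simp add: fundamental_channel_def L_def[abs_def])
  have Llin: "linear L"
  proof (rule linearI)
    show "L (a + b) = L a + L b" for a b
      by (simp add: L_def linear_add[OF lin] limit_channel_def trace_add cscale_add_left)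
    show "L (r *\<^sub>R a) = r *\<^sub>R L a" for r a
    proof -
      have lc: "limit_channel \<rho> (r *\<^sub>R a) = r *\<^sub>R limit_channel \<rho> a"
        unfolding limit_channel_def trace_scaleR by (simp add: scaleR_cscale cscale_def vec_eq_iff mult.assoc)
      show ?thesis by (simp add: L_def linear_scale[OF lin] lc scaleR_diff_right scaleR_add_right)
    qed
  qed
  have ker: "X = 0" if "L X = 0" for X
  proof (rule ccontr)
    assume X0: "X \<noteq> 0"
    have "trace (L X) = trace X"
      using tp tr\<rho> by (simp add: L_def trace_add trace_sub limit_channel_def trace_cscale trace_preserving_def)
    then have tX: "trace X = 0" using that by (simp add: trace_def)
    then have "F1 X = X" using that by (simp add: L_def limit_channel_def)
    then have mem: "1 \<in> {trace_norm (F1 s) / trace_norm s | s. s \<noteq> 0 \<and> trace s = 0}"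
      using X0 tX tn_pos[OF X0] by (intro CollectI exI[of _ X]) simp
    have "bdd_above {trace_norm (F1 s) / trace_norm s | s. s \<noteq> 0 \<and> trace s = 0}"
      by (rule bdd_above_mono[OF n11_bdd[OF lin]]) blast
    from cSup_upper[OF mem this] have "1 \<le> ergodicity_coeff F1" by (simp add: ergodicity_coeff_def)
    with erg show False by simp
  qed
  have injL: "inj L"
  proof (rule injI)
    fix X Y assume "L X = L Y"
    then have "L (X - Y) = 0" by (simp add: linear_diff[OF Llin])
    then have "X - Y = 0" by (rule ker)
    then show "X = Y" by simp
  qed
  have surjL: "surj L" by (rule linear_injective_imp_surjective[OF Llin injL]) simp
  have LZ: "L (inv L X) = X" for X by (rule surj_f_inv_f[OF surjL])
  show "fundamental_channel F1 \<rho> X - F1 (fundamental_channel F1 \<rho> X)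
        + limit_channel \<rho> (fundamental_channel F1 \<rho> X) = X" for X
    using LZ[of X] by (simp add: Zdef L_def)
  show "linear (fundamental_channel F1 \<rho>)"
    unfolding Zdef
  proof (rule linearI)
    show "inv L (a + b) = inv L a + inv L b" for a b
      by (rule injD[OF injL]) (simp add: LZ linear_add[OF Llin])
    show "inv L (r *\<^sub>R a) = r *\<^sub>R inv L a" for r a
      by (rule injD[OF injL]) (simp add: LZ linear_scale[OF Llin])
  qed
qed



theorem mainTheorem7:
  fixes F1 F2 :: "'n::finite cmat \<Rightarrow> 'n cmat" and \<rho>1 \<xi> :: "'n cmat"
  assumes "completely_positive F1" and "completely_positive F2"
    and "spectral_radius_map F1 = 1" and "spectral_radius_map F2 = 1"
    and "trace_preserving F1" and "ergodicity_coeff F1 < 1"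
    and "density \<rho>1" and "F1 \<rho>1 = \<rho>1"
    and "\<forall>\<sigma>. density \<sigma> \<and> F1 \<sigma> = \<sigma> \<longrightarrow> \<sigma> = \<rho>1"
    and "dual_map F2 \<xi> = \<xi>" and "trace (\<rho>1 ** \<xi>) = 1"
    and "norm_11 (fundamental_channel F1 \<rho>1) * norm_11 (\<lambda>X. F1 X - F2 X) < 1"
  shows "schatten_inf (mat 1 - \<xi>) \<le>
    norm_11 (fundamental_channel F1 \<rho>1) * norm_11 (\<lambda>X. F1 X - F2 X) /
    (1 - norm_11 (fundamental_channel F1 \<rho>1) * norm_11 (\<lambda>X. F1 X - F2 X))"
proof -
  have F1c: "clinear_map F1" and F2c: "clinear_map F2"
    using assms(1,2) by (auto simp: completely_positive_def)
  have F1l: "linear F1" and F2l: "linear F2" using F1c F2c by (auto intro: clin_linear)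
  define G where "G X = F1 X - F2 X" for X
  have Gl: "linear G" unfolding G_def by (intro linear_compose_sub F1l F2l)
  have tr\<rho>: "trace \<rho>1 = 1" using assms(7) by (simp add: density_def)
  define Z where "Z = fundamental_channel F1 \<rho>1"
  have Zl: "linear Z" and LZ: "\<And>X. Z X - F1 (Z X) + limit_channel \<rho>1 (Z X) = X"
    using fund_props[OF F1l assms(5,6) tr\<rho>] by (auto simp: Z_def)
  define a where "a = norm_11 Z"
  define b where "b = norm_11 G"
  have a0: "a \<ge> 0" unfolding a_def by (rule n11_nonneg[OF Zl])
  have b0: "b \<ge> 0" unfolding b_def by (rule n11_nonneg[OF Gl])
  have ab1: "a * b < 1" using assms(12) by (simp add: a_def b_def Z_def G_def[abs_def])
  have key: "trace ((mat 1 - \<xi>) ** R) = trace (\<xi> ** G (Z R))" for R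
  proof -
    define W where "W = Z R"
    have RW: "R = W - F1 W + cscale (trace W) \<rho>1"
      using LZ[of R] by (simp add: W_def limit_channel_def)
    have trF: "trace (F1 W) = trace W" using assms(5) by (simp add: trace_preserving_def)
    have t1: "trace R = trace W"
      unfolding RW by (simp add: trace_add trace_sub trace_cscale trF tr\<rho>)
    have t\<xi>\<rho>: "trace (\<xi> ** \<rho>1) = 1" using assms(11) trace_mul_sym[of \<xi> \<rho>1] by simp
    have t2: "trace (\<xi> ** R) = trace (\<xi> ** W) - trace (\<xi> ** F1 W) + trace W"
      unfolding RW tr_add tr_diff tr_cscale t\<xi>\<rho> by simp
    have t3: "trace (\<xi> ** W) = trace (\<xi> ** F2 W)"
      using dual_prop[OF F2c, of \<xi> W] assms(10) by simp
    have "trace ((mat 1 - \<xi>) ** R) = trace R - trace (\<xi> ** R)"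
      by (simp add: mm_diff_r trace_sub)
    also have "\<dots> = trace (\<xi> ** F1 W) - trace (\<xi> ** F2 W)" using t1 t2 t3 by simp
    also have "\<dots> = trace (\<xi> ** G W)" by (simp add: G_def tr_diff)
    finally show ?thesis by (simp add: W_def)
  qed
  define s where "s = schatten_inf (mat 1 - \<xi>)"
  have sdef: "s = onorm ((*v) (mat 1 - \<xi>))" by (simp add: s_def schatten_inf_def)
  have s0: "s \<ge> 0" unfolding sdef by (rule onorm_pos_le) simp
  have o\<xi>0: "onorm ((*v) \<xi>) \<ge> 0" by (rule onorm_pos_le) simp
  have o\<xi>: "onorm ((*v) \<xi>) \<le> 1 + s"
  proof (rule onorm_le)
    fix x :: "complex^'n"
    have "\<xi> *v x = x - (mat 1 - \<xi>) *v x" by (simp add: matrix_vector_mult_diff_rdistrib)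
    then have "norm (\<xi> *v x) \<le> norm x + norm ((mat 1 - \<xi>) *v x)" by (metis norm_triangle_ineq4)
    also have "norm ((mat 1 - \<xi>) *v x) \<le> s * norm x"
      unfolding sdef by (rule onorm) simp
    finally show "norm (\<xi> *v x) \<le> (1 + s) * norm x" by (simp add: algebra_simps)
  qed
  have bound: "norm ((mat 1 - \<xi>) *v x) \<le> (onorm ((*v) \<xi>) * a * b) * norm x" for x
  proof -
    define w where "w = (mat 1 - \<xi>) *v x"
    define R where "R = outer x w"
    have "(norm w)\<^sup>2 = Re (cin w ((mat 1 - \<xi>) *v x))" by (simp add: w_def cin_self_Re)
    also have "\<dots> = Re (trace (\<xi> ** G (Z R)))" by (simp add: trace_outer[symmetric] key R_def)
    also have "\<dots> \<le> cmod (trace (\<xi> ** G (Z R)))" by (rule complex_Re_le_cmod)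
    also have "\<dots> \<le> onorm ((*v) \<xi>) * trace_norm (G (Z R))" by (rule holder)
    also have "\<dots> \<le> onorm ((*v) \<xi>) * (b * (a * trace_norm R))"
    proof (rule mult_left_mono[OF _ o\<xi>0])
      have "trace_norm (G (Z R)) \<le> b * trace_norm (Z R)" unfolding b_def by (rule n11_le[OF Gl])
      also have "\<dots> \<le> b * (a * trace_norm R)"
        unfolding a_def by (rule mult_left_mono[OF n11_le[OF Zl] b0])
      finally show "trace_norm (G (Z R)) \<le> b * (a * trace_norm R)" .
    qed
    also have "\<dots> = (onorm ((*v) \<xi>) * a * b * norm x) * norm w"
      by (simp add: R_def tn_outer algebra_simps)
    finally have ineq: "(norm w)\<^sup>2 \<le> (onorm ((*v) \<xi>) * a * b * norm x) * norm w" .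
    show ?thesis
    proof (cases "w = 0")
      case True then show ?thesis using o\<xi>0 a0 b0 by (simp add: w_def[symmetric])
    next
      case False
      then have "norm w > 0" by simp
      with ineq have "norm w \<le> onorm ((*v) \<xi>) * a * b * norm x"
        by (simp add: power2_eq_square mult_le_cancel_right_pos)
      then show ?thesis by (simp add: w_def)
    qed
  qed
  have "s \<le> (1 + s) * (a * b)"
    unfolding sdef
  proof (rule onorm_le)
    fix x
    have "norm ((mat 1 - \<xi>) *v x) \<le> (onorm ((*v) \<xi>) * a * b) * norm x" by (rule bound)
    also have "\<dots> \<le> ((1 + s) * (a * b)) * norm x"
      using o\<xi> a0 b0 by (intro mult_right_mono) (auto intro: mult_right_mono simp: mult.assoc)
    finally show "norm ((mat 1 - \<xi>) *v x) \<le> (1 + onorm ((*v) (mat 1 - \<xi>))) * (a * b) * norm x"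
      by (simp add: sdef)
  qed
  then have "s * (1 - a * b) \<le> a * b" by (simp add: algebra_simps)
  then have "s \<le> a * b / (1 - a * b)" using ab1 by (simp add: pos_le_divide_eq)
  then show ?thesis by (simp add: s_def a_def b_def Z_def G_def[abs_def])
qed


end
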